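(* Let $q'>0$, $e'=0$, $q_{\max}>0$, $\mathcal D''_1=\{e:0\le e\le1\}$, $\mathcal D_2=\{(q,\omega):0<q\le q_{\max},\ 0\le\omega\le\pi/2\}$. For each $(q,\omega)\in\mathcal D_2$, $$\min_{e\in\mathcal D''_1}\delta_{\rm nod}=\max\Big\{0,\ q'-\frac{2q}{1-\cos\omega},\ q-q'\Big\},\qquad \max_{e\in\mathcal D''_1}\delta_{\rm nod}=\max\Big\{q'-q,\ \frac{2q}{1+\cos\omega}-q'\Big\}.$$
   Context: Here the trajectory $\mathcal A'$ is a circle of radius $q'$ ($e'=0$), so $r'_+=r'_-=q'$. For $q>0$, $e\in[0,1]$, $\omega$ an angle, define $r_{\pm}=\frac{q(1+e)}{1\pm e\cos\omega}$ (extended-real value $+\infty$ when the denominator vanishes; $\frac{2q}{1-\cos\omega}=+\infty$ at $\omega=0$), $d^\pm=q'-r_\pm$, and the nodal distance $\delta_{\rm nod}(q,e,\omega)=\min\{|d^+|,|d^-|\}$. *)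

theory Defs
  imports Complex_Main "HOL-Library.Extended_Real"
begin

definition r_plus :: "real \<Rightarrow> real \<Rightarrow> real \<Rightarrow> ereal" where
  "r_plus q e \<omega> = (if 1 + e * cos \<omega> = 0 then \<infinity> else ereal (q * (1 + e) / (1 + e * cos \<omega>)))"

definition r_minus :: "real \<Rightarrow> real \<Rightarrow> real \<Rightarrow> ereal" where
  "r_minus q e \<omega> = (if 1 - e * cos \<omega> = 0 then \<infinity> else ereal (q * (1 + e) / (1 - e * cos \<omega>)))"

text \<open>Nodal distance for a circular trajectory of radius qp: d = qp - r.\<close>
definition delta_nod :: "real \<Rightarrow> real \<Rightarrow> real \<Rightarrow> real \<Rightarrow> ereal" where
  "delta_nod qp q e \<omega> = min \<bar>ereal qp - r_plus q e \<omega>\<bar> \<bar>ereal qp - r_minus q e \<omega>\<bar>"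

end

theory Submission
  imports Defs
begin

lemma rp_bounds:
  fixes q e c :: real
  assumes "0\<le>e" "e\<le>1" "0\<le>c" "c\<le>1" "q>0"
  shows "q \<le> q*(1+e)/(1+e*c)" "q*(1+e)/(1+e*c) \<le> 2*q/(1+c)"
proof -
  have p: "1+e*c > 0" using assms by (simp add: add_pos_nonneg)
  have "e*c \<le> e" using assms by (simp add: mult_left_le)
  then show "q \<le> q*(1+e)/(1+e*c)" using p assms by (simp add: divide_simps)
  have "0 \<le> (1-c)*(1-e)" using assms by simp
  then have "(1+e)*(1+c) \<le> 2*(1+e*c)" by (simp add: algebra_simps)
  then have "q*((1+e)*(1+c)) \<le> q*(2*(1+e*c))" using assms by simp
  then show "q*(1+e)/(1+e*c) \<le> 2*q/(1+c)" using p assms by (simp add: divide_simps algebra_simps)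
qed

lemma rm_bounds:
  fixes q e c :: real
  assumes "0\<le>e" "e\<le>1" "0\<le>c" "c\<le>1" "q>0" "1 - e*c \<noteq> 0"
  shows "q*(1+e)/(1+e*c) \<le> q*(1+e)/(1-e*c)" "c < 1 \<Longrightarrow> q*(1+e)/(1-e*c) \<le> 2*q/(1-c)"
proof -
  have ec: "e*c \<le> 1" using assms by (simp add: mult_le_one)
  then have m: "1 - e*c > 0" using assms by simp
  have p: "1+e*c > 0" using assms by (simp add: add_pos_nonneg)
  have "0 \<le> e*c" using assms by simp
  have "q*(1+e) \<ge> 0" using assms by simp
  then show "q*(1+e)/(1+e*c) \<le> q*(1+e)/(1-e*c)"
    using m p \<open>0 \<le> e*c\<close> by (intro divide_left_mono) (auto simp: mult_pos_pos)
  assume c1: "c<1"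
  have "0 \<le> (1+c)*(1-e)" using assms by simp
  then have "(1+e)*(1-c) \<le> 2*(1-e*c)" by (simp add: algebra_simps)
  then have "q*((1+e)*(1-c)) \<le> q*(2*(1-e*c))" using assms by simp
  then show "q*(1+e)/(1-e*c) \<le> 2*q/(1-c)" using m c1 assms by (simp add: divide_simps algebra_simps)
qed

theorem proposition8:
  fixes qp qmax q \<omega> :: real
  assumes "qp > 0" and "qmax > 0" and "0 < q" and "q \<le> qmax"
    and "0 \<le> \<omega>" and "\<omega> \<le> pi / 2"
  shows "(\<exists>e\<in>{0..1}. delta_nod qp q e \<omega> =
            max 0 (max (ereal qp - (if cos \<omega> = 1 then \<infinity> else ereal (2 * q / (1 - cos \<omega>))))
                       (ereal (q - qp))))
       \<and> (\<forall>e\<in>{0..1}. max 0 (max (ereal qp - (if cos \<omega> = 1 then \<infinity> else ereal (2 * q / (1 - cos \<omega>))))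
                       (ereal (q - qp))) \<le> delta_nod qp q e \<omega>)
       \<and> (\<exists>e\<in>{0..1}. delta_nod qp q e \<omega> = ereal (max (qp - q) (2 * q / (1 + cos \<omega>) - qp)))
       \<and> (\<forall>e\<in>{0..1}. delta_nod qp q e \<omega> \<le> ereal (max (qp - q) (2 * q / (1 + cos \<omega>) - qp)))"
proof -
  define c where "c = cos \<omega>"
  have c0: "0 \<le> c" unfolding c_def by (rule cos_ge_zero) (use assms in auto)
  have c1: "c \<le> 1" unfolding c_def by simp
  have qq: "q > 0" using assms by simp
  define rp where "rp e = q*(1+e)/(1+e*c)" for e
  define rm where "rm e = q*(1+e)/(1-e*c)" for e
  have pos: "1 + e*c \<noteq> 0" if "0\<le>e" for e using that c0
    by (smt (verit) mult_nonneg_nonneg)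
  have dreal: "delta_nod qp q e \<omega> = ereal (min \<bar>qp - rp e\<bar> \<bar>qp - rm e\<bar>)"
    if "0\<le>e" "e\<le>1" "1 - e*c \<noteq> 0" for e
    using that pos[OF that(1)] unfolding delta_nod_def r_plus_def r_minus_def rp_def rm_def c_def
    by simp
  have dinf: "delta_nod qp q e \<omega> = ereal \<bar>qp - rp e\<bar>"
    if "0\<le>e" "e\<le>1" "1 - e*c = 0" for e
    using that pos[OF that(1)] unfolding delta_nod_def r_plus_def r_minus_def rp_def rm_def c_def
    by simp
  have rpb: "q \<le> rp e" "rp e \<le> 2*q/(1+c)" if "0\<le>e" "e\<le>1" for e
    using rp_bounds[OF that c0 c1 qq] unfolding rp_def by auto
  have rmb: "rp e \<le> rm e" "c < 1 \<Longrightarrow> rm e \<le> 2*q/(1-c)" if "0\<le>e" "e\<le>1" "1 - e*c \<noteq> 0" for e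
    using rm_bounds[OF that(1,2) c0 c1 qq that(3)] unfolding rp_def rm_def by auto
  define L where "L = max 0 (max (ereal qp - (if cos \<omega> = 1 then \<infinity> else ereal (2 * q / (1 - cos \<omega>))))
                       (ereal (q - qp)))"
  define U where "U = max (qp - q) (2 * q / (1 + cos \<omega>) - qp)"
  have Lle: "L \<le> ereal m" if "0 \<le> m" "q - qp \<le> m" "c < 1 \<Longrightarrow> qp - 2*q/(1-c) \<le> m" for m
  proof (cases "c = 1")
    case True
    have "L = max 0 (ereal (q - qp))" unfolding L_def using True unfolding c_def by simp
    then show ?thesis using that by simp
  next
    case False then have "c < 1" using c1 by simp
    have "L = max 0 (max (ereal (qp - 2*q/(1-c))) (ereal (q - qp)))" unfolding L_def using False unfolding c_def by simp
    then show ?thesis using that \<open>c < 1\<close> by simp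
  qed
  have part2: "\<forall>e\<in>{0..1}. L \<le> delta_nod qp q e \<omega>"
  proof
    fix e :: real assume e: "e \<in> {0..1}"
    hence e0: "0\<le>e" and e1: "e\<le>1" by auto
    show "L \<le> delta_nod qp q e \<omega>"
    proof (cases "1 - e*c = 0")
      case True
      hence "c = 1" using e0 e1 c0 c1
        using mult_right_mono[of e 1 c] by simp
      have "L \<le> ereal \<bar>qp - rp e\<bar>"
        by (rule Lle) (use rpb[OF e0 e1] \<open>c = 1\<close> in simp_all)
      then show ?thesis using dinf[OF e0 e1 True] by simp
    next
      case False
      note R = rpb[OF e0 e1] rmb[OF e0 e1 False]
      have "L \<le> ereal (min \<bar>qp - rp e\<bar> \<bar>qp - rm e\<bar>)"
      proof (rule Lle)
        show "0 \<le> min \<bar>qp - rp e\<bar> \<bar>qp - rm e\<bar>" by simp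
        show "q - qp \<le> min \<bar>qp - rp e\<bar> \<bar>qp - rm e\<bar>" using R by linarith
        assume "c < 1"
        then show "qp - 2*q/(1-c) \<le> min \<bar>qp - rp e\<bar> \<bar>qp - rm e\<bar>" using R by linarith
      qed
      then show ?thesis using dreal[OF e0 e1 False] by simp
    qed
  qed
  have part4: "\<forall>e\<in>{0..1}. delta_nod qp q e \<omega> \<le> ereal U"
  proof
    fix e :: real assume e: "e \<in> {0..1}"
    hence e0: "0\<le>e" and e1: "e\<le>1" by auto
    have "\<bar>qp - rp e\<bar> \<le> U" using rpb[OF e0 e1] unfolding U_def c_def by auto
    then show "delta_nod qp q e \<omega> \<le> ereal U"
      by (cases "1 - e*c = 0") (auto simp: dinf[OF e0 e1] dreal[OF e0 e1] min_le_iff_disj)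
  qed
  have part3: "\<exists>e\<in>{0..1}. delta_nod qp q e \<omega> = ereal U"
  proof (cases "qp - q \<ge> 2 * q / (1 + c) - qp")
    case True
    have "2*q/(1+c) \<ge> q" using c0 c1 qq by (simp add: divide_simps)
    hence "qp \<ge> q" using True by simp
    have "delta_nod qp q 0 \<omega> = ereal U"
      using dreal[of 0] True \<open>qp \<ge> q\<close> unfolding rp_def rm_def U_def c_def by simp
    then show ?thesis by force
  next
    case False
    have "2*q/(1+c) \<ge> q" using c0 c1 qq by (simp add: divide_simps)
    hence gt: "rp 1 > qp" using False unfolding rp_def by simp
    have "delta_nod qp q 1 \<omega> = ereal U"
    proof (cases "1 - 1*c = 0")
      case True
      then show ?thesis using dinf[of 1] gt False unfolding U_def c_def rp_def by simp
    next
      case F: False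
      have "rp 1 \<le> rm 1" using rmb(1)[of 1] F by simp
      then show ?thesis using dreal[of 1] F gt False unfolding U_def c_def rp_def by simp
    qed
    then show ?thesis by force
  qed
  have part1: "\<exists>e\<in>{0..1}. delta_nod qp q e \<omega> = L"
  proof (cases "qp \<le> q")
    case True
    have "2*q/(1-c) \<ge> q" if "c < 1" using c0 that qq by (simp add: divide_simps)
    hence "L = ereal (q - qp)" using True qq cos_le_one[of \<omega>] unfolding L_def c_def
      by (cases "cos \<omega> = 1") (auto simp: max_def)
    moreover have "delta_nod qp q 0 \<omega> = ereal (q - qp)"
      using dreal[of 0] True unfolding rp_def rm_def by simp
    ultimately show ?thesis by force
  next
    case qpq: False
    show ?thesis
    proof (cases "c < 1 \<and> qp*(1-c) \<ge> 2*q")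
      case True
      hence cl: "c < 1" and ge: "qp \<ge> 2*q/(1-c)" by (auto simp: divide_simps mult.commute)
      have F: "1 - 1*c \<noteq> 0" using cl by simp
      have R: "rp 1 \<le> rm 1" "rm 1 = 2*q/(1-c)" using rmb(1)[of 1] F unfolding rm_def by auto
      have "L = ereal (qp - 2*q/(1-c))" using cl ge qpq unfolding L_def c_def
        by (auto simp: max_def)
      moreover have "delta_nod qp q 1 \<omega> = ereal (qp - 2*q/(1-c))"
        using dreal[of 1] F R ge by simp
      ultimately show ?thesis by force
    next
      case False
      define e where "e = (qp - q)/(q + qp*c)"
      have den: "q + qp*c > 0" using qq c0 assms(1) by (simp add: add_pos_nonneg)
      have le: "qp*(1-c) \<le> 2*q"
      proof (cases "c < 1")
        case True then show ?thesis using False by simp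
      next
        case False then have "c = 1" using c1 by simp
        then show ?thesis using qq by simp
      qed
      have e0: "0 \<le> e" using qpq den unfolding e_def by simp
      have e1: "e \<le> 1" using le den unfolding e_def by (simp add: divide_simps algebra_simps)
      have eq: "q*(1+e) = qp*(1-e*c)" using den unfolding e_def
        by (simp add: field_simps)
      have nz: "1 - e*c \<noteq> 0"
      proof
        assume "1 - e*c = 0"
        then have "q*(1+e) = 0" using eq by simp
        then show False using qq e0 by simp
      qed
      have "rm e = qp" unfolding rm_def using eq nz by (simp add: divide_simps)
      hence "delta_nod qp q e \<omega> = 0" using dreal[OF e0 e1 nz] by (simp add: zero_ereal_def)
      moreover have "L = 0"
      proof -
        have "ereal qp - (if cos \<omega> = 1 then \<infinity> else ereal (2 * q / (1 - cos \<omega>))) \<le> 0"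
        proof (cases "c = 1")
          case True then show ?thesis unfolding c_def by simp
        next
          case F: False
          hence "c < 1" using c1 by simp
          hence "qp \<le> 2*q/(1-c)" using le by (simp add: divide_simps mult.commute)
          then show ?thesis using F unfolding c_def by simp
        qed
        then show ?thesis unfolding L_def using qpq by (simp add: max_def)
      qed
      ultimately show ?thesis using e0 e1 by force
    qed
  qed
  show ?thesis using part1 part2 part3 part4 unfolding L_def U_def by blast
qed

end
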